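(* Let $\mathrm{k}$ be an infinite field and $\mathcal{A}$ a unital associative $\mathrm{k}$-algebra satisfying $\mathbf{H}_{\mathrm{s}}$. Let $V,W$ be finite-dimensional $\mathrm{k}$-subspaces of $\mathcal{A}$ such that the elements of $V$ pairwise commute, $V\cap U(\mathcal{A})\neq\emptyset$ and $W\cap U(\mathcal{A})\neq\emptyset$. Then there exist a $\mathrm{k}$-subspace $S$ of $\mathrm{k}\langle VW\rangle$ and a finite-dimensional subalgebra $\mathcal{H}$ of $\mathcal{A}$ such that $S\cap U(\mathcal{A})\neq\emptyset$, $\mathrm{k}\subseteq\mathcal{H}\subseteq\mathcal{A}$, $\dim_{\mathrm{k}}\mathrm{k}\langle VW\rangle\geq\dim_{\mathrm{k}}S\geq\dim_{\mathrm{k}}V+\dim_{\mathrm{k}}W-\dim_{\mathrm{k}}\mathcal{H}$, and $\mathcal{H}S=S$.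
   Context: Algebras are unital associative, subalgebras contain $1$; $U(\mathcal{A})$ is the group of invertible elements; $\mathrm{k}\langle S\rangle$ is linear span; $VW=\{vw\mid v\in V,w\in W\}$. Hypothesis $\mathbf{H}_{\mathrm{s}}$: $\mathcal{A}$ is finite-dimensional over $\mathrm{k}$, or $\mathrm{k}\in\{\mathbb{R},\mathbb{C}\}$ and $\mathcal{A}$ is a Banach algebra over $\mathrm{k}$, or $\mathcal{A}$ is a finite product of field extensions of $\mathrm{k}$. No hypothesis on the number of subalgebras is made. *)

theory Defs
  imports "HOL-Analysis.Analysis"
begin

definition is_k_algebra :: "('k::field \<Rightarrow> 'a::ring_1 \<Rightarrow> 'a) \<Rightarrow> bool" where
  "is_k_algebra smult_k \<longleftrightarrow> vector_space smult_k \<and>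
     (\<forall>c x y. smult_k c (x * y) = smult_k c x * y \<and> smult_k c (x * y) = x * smult_k c y)"

definition units_of_ring :: "'a::ring_1 set" where
  "units_of_ring = {x. \<exists>y. x * y = 1 \<and> y * x = 1}"

definition set_prod :: "'a::times set \<Rightarrow> 'a set \<Rightarrow> 'a set" where
  "set_prod V W = {v * w | v w. v \<in> V \<and> w \<in> W}"

definition fin_dim_subspace :: "('k::field \<Rightarrow> 'a::ring_1 \<Rightarrow> 'a) \<Rightarrow> 'a set \<Rightarrow> bool" where
  "fin_dim_subspace smult_k V \<longleftrightarrow> module.subspace smult_k V \<and>
     (\<exists>B. finite B \<and> B \<subseteq> V \<and> module.span smult_k B = V)"

definition is_subalgebra :: "('k::field \<Rightarrow> 'a::ring_1 \<Rightarrow> 'a) \<Rightarrow> 'a set \<Rightarrow> bool" where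
  "is_subalgebra smult_k H \<longleftrightarrow> module.subspace smult_k H \<and> 1 \<in> H \<and>
     (\<forall>x\<in>H. \<forall>y\<in>H. x * y \<in> H)"

definition field_iso :: "('k::field \<Rightarrow> 'f::field) \<Rightarrow> bool" where
  "field_iso \<phi> \<longleftrightarrow> bij \<phi> \<and> \<phi> 1 = 1 \<and>
     (\<forall>a b. \<phi> (a + b) = \<phi> a + \<phi> b \<and> \<phi> (a * b) = \<phi> a * \<phi> b)"

definition banach_algebra_norm ::
    "('k::field \<Rightarrow> 'a::ring_1 \<Rightarrow> 'a) \<Rightarrow> ('k \<Rightarrow> real) \<Rightarrow> ('a \<Rightarrow> real) \<Rightarrow> bool" where
  "banach_algebra_norm smult_k a N \<longleftrightarrow>
     (\<forall>x. 0 \<le> N x) \<and> (\<forall>x. N x = 0 \<longleftrightarrow> x = 0) \<and>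
     (\<forall>x y. N (x + y) \<le> N x + N y) \<and>
     (\<forall>c x. N (smult_k c x) = a c * N x) \<and>
     (\<forall>x y. N (x * y) \<le> N x * N y) \<and>
     (\<forall>X :: nat \<Rightarrow> 'a.
        (\<forall>e>0. \<exists>M. \<forall>m\<ge>M. \<forall>n\<ge>M. N (X m - X n) < e) \<longrightarrow>
        (\<exists>L. (\<lambda>n. N (X n - L)) \<longlonglongrightarrow> 0))"

definition banach_over_R_or_C :: "('k::field \<Rightarrow> 'a::ring_1 \<Rightarrow> 'a) \<Rightarrow> bool" where
  "banach_over_R_or_C smult_k \<longleftrightarrow>
     (\<exists>(\<phi> :: 'k \<Rightarrow> real) N. field_iso \<phi> \<and> banach_algebra_norm smult_k (\<lambda>c. \<bar>\<phi> c\<bar>) N) \<or>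
     (\<exists>(\<phi> :: 'k \<Rightarrow> complex) N. field_iso \<phi> \<and> banach_algebra_norm smult_k (\<lambda>c. cmod (\<phi> c)) N)"

text \<open>A is a finite product of field extensions of k, expressed as an internal
  direct product: A commutative, with orthogonal idempotents e_0..e_(n-1) summing
  to 1 such that each e_i A is a field (with identity e_i).\<close>
definition finite_product_of_fields :: "'a::ring_1 itself \<Rightarrow> bool" where
  "finite_product_of_fields _ \<longleftrightarrow>
     (\<forall>x y :: 'a. x * y = y * x) \<and>
     (\<exists>(n::nat) (e :: nat \<Rightarrow> 'a).
        (\<forall>i<n. e i * e i = e i \<and> e i \<noteq> 0) \<and>
        (\<forall>i<n. \<forall>j<n. i \<noteq> j \<longrightarrow> e i * e j = 0) \<and>
        (\<Sum>i<n. e i) = 1 \<and>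
        (\<forall>i<n. \<forall>x. x = e i * x \<and> x \<noteq> 0 \<longrightarrow> (\<exists>y. x * y = e i)))"

definition hyp_Hs :: "('k::field \<Rightarrow> 'a::ring_1 \<Rightarrow> 'a) \<Rightarrow> bool" where
  "hyp_Hs smult_k \<longleftrightarrow> fin_dim_subspace smult_k (UNIV :: 'a set) \<or>
     banach_over_R_or_C smult_k \<or> finite_product_of_fields TYPE('a)"

end

theory Submission
  imports Defs
begin

locale kalg = vector_space scale for scale :: "'k::field \<Rightarrow> 'a::ring_1 \<Rightarrow> 'a" (infixr \<open>*k\<close> 75) +
  assumes ml: "c *k (x*y) = (c *k x) * y" and mr: "c *k (x*y) = x * (c *k y)"
begin

definition fd :: "'a set \<Rightarrow> bool" where
  "fd S \<longleftrightarrow> subspace S \<and> (\<exists>B. finite B \<and> B \<subseteq> S \<and> span B = S)"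

lemma fd_basis:
  assumes "fd T"
  obtains B where "finite B" "B \<subseteq> T" "independent B" "span B = T" "card B = dim T"
proof -
  from assms obtain F where F: "finite F" "F \<subseteq> T" "span F = T" and sT: "subspace T"
    unfolding fd_def by blast
  obtain B where B: "B \<subseteq> T" "independent B" "T \<subseteq> span B" "card B = dim T"
    using basis_exists by blast
  have "finite B" using independent_span_bound[OF F(1) B(2)] B(1) F(3) by blast
  moreover have "span B = T" using B sT by (simp add: span_subspace)
  ultimately show ?thesis using that B by blast
qed

lemma indep_le_dim:
  assumes "fd T" "I \<subseteq> T" "independent I"
  shows "finite I \<and> card I \<le> dim T"
proof -
  obtain B where B: "finite B" "B \<subseteq> T" "independent B" "span B = T" "card B = dim T"
    using fd_basis[OF assms(1)] by blast
  show ?thesis using independent_span_bound[OF B(1) assms(3)] assms(2) B by auto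
qed

lemma fd_sub:
  assumes "fd T" "subspace S" "S \<subseteq> T"
  shows "fd S"
proof -
  obtain B where B: "B \<subseteq> S" "independent B" "S \<subseteq> span B" "card B = dim S"
    using basis_exists by blast
  have "finite B" using indep_le_dim[OF assms(1) _ B(2)] B(1) assms(3) by blast
  moreover have "span B = S" using B assms(2) by (simp add: span_subspace)
  ultimately show ?thesis unfolding fd_def using B assms(2) by blast
qed

lemma dim_mono_fd:
  assumes "fd T" "S \<subseteq> T"
  shows "dim S \<le> dim T"
proof -
  obtain B where B: "B \<subseteq> S" "independent B" "S \<subseteq> span B" "card B = dim S"
    using basis_exists by blast
  show ?thesis using indep_le_dim[OF assms(1) _ B(2)] B assms(2) by auto
qed

lemma fd_span: "finite F \<Longrightarrow> fd (span F)"
  unfolding fd_def using span_superset by blast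

lemma dim_psub:
  assumes "fd T" "subspace S" "S \<subseteq> T" "S \<noteq> T"
  shows "dim S < dim T"
proof (rule ccontr)
  assume "\<not> dim S < dim T"
  then have eq: "dim S \<ge> dim T" by simp
  have fS: "fd S" using fd_sub assms by blast
  obtain B where B: "finite B" "B \<subseteq> S" "independent B" "span B = S" "card B = dim S"
    using fd_basis[OF fS] by blast
  obtain v where v: "v \<in> T" "v \<notin> S" using assms by blast
  have "independent (insert v B)" using B v independent_insertI by blast
  then have "card (insert v B) \<le> dim T" using indep_le_dim[OF assms(1)] B v assms(3) by blast
  moreover have "v \<notin> B" using B(2) v by blast
  then have "card (insert v B) = dim S + 1" using B(1,5) by simp
  ultimately show False using eq by simp
qed

lemma dim_inj_image:
  assumes lf: "Vector_Spaces.linear scale scale f" and fi: "inj f"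
  shows "dim (f ` S) = dim S"
proof -
  interpret lf: Vector_Spaces.linear scale scale f by fact
  obtain B where B: "B \<subseteq> S" "independent B" "S \<subseteq> span B" "card B = dim S"
    using basis_exists[of S] by auto
  then have "span S = span B"
    using span_mono[of B S] span_mono[of S "span B"] span_span[of B] by auto
  moreover have "card (f ` B) = card B"
    using card_image[of f B] inj_on_subset[of f UNIV B] fi by auto
  moreover have "independent (f ` B)"
    using B(2) fi lf.dependent_inj_imageD[of B] inj_on_subset by blast
  ultimately have "dim (f ` S) = card B"
  proof -
    assume a: "span S = span B" "card (f ` B) = card B" "independent (f ` B)"
    have "dim (f ` S) = dim (span (f ` S))" by simp
    also have "\<dots> = dim (f ` span S)" by (simp add: lf.span_image)
    also have "\<dots> = dim (f ` span B)" using a by simp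
    also have "\<dots> = dim (f ` B)" by (simp add: lf.span_image[symmetric])
    also have "\<dots> = card B" using a dim_eq_card_independent by simp
    finally show ?thesis .
  qed
  then show ?thesis using B(4) by simp
qed

lemma lin_mul: "Vector_Spaces.linear scale scale (\<lambda>s. a * s * b)"
  unfolding Vector_Spaces.linear_iff
  by (auto simp: vector_space_axioms distrib_left distrib_right ml[symmetric] mr[symmetric])

lemma LM:
  assumes "subspace T" "\<forall>g\<in>G. x*g \<in> T" "y \<in> span G"
  shows "x*y \<in> T"
proof -
  have "subspace {y. x*y \<in> T}"
    using assms(1) by (auto simp: subspace_def distrib_left mr[symmetric])
  then have "span G \<subseteq> {y. x*y \<in> T}" using assms(2) span_minimal[of G "{y. x*y \<in> T}"] by blast
  then show ?thesis using assms(3) by blast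
qed

lemma RM:
  assumes "subspace T" "\<forall>g\<in>G. g*y \<in> T" "x \<in> span G"
  shows "x*y \<in> T"
proof -
  have "subspace {x. x*y \<in> T}"
    using assms(1) by (auto simp: subspace_def distrib_right ml[symmetric])
  then have "span G \<subseteq> {x. x*y \<in> T}" using assms(2) span_minimal[of G "{x. x*y \<in> T}"] by blast
  then show ?thesis using assms(3) by blast
qed

lemma prod_span:
  assumes "x \<in> span X" "y \<in> span Y"
  shows "x*y \<in> span (set_prod X Y)"
proof (rule RM[OF subspace_span _ assms(1)], intro ballI)
  fix g assume g: "g \<in> X"
  show "g*y \<in> span (set_prod X Y)"
    by (rule LM[OF subspace_span _ assms(2)]) (use g in \<open>auto simp: set_prod_def intro: span_base\<close>)
qed

lemma step_dim:
  fixes e :: 'a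
  assumes fV: "fd V" and fW: "fd W"
  defines "V' \<equiv> {v\<in>V. v * e \<in> W}" and "W' \<equiv> span (W \<union> (\<lambda>v. v * e) ` V)"
  shows "dim V + dim W \<le> dim V' + dim W'" and "fd V'" and "fd W'"
proof -
  define f where "f = (\<lambda>v. v * e)"
  have lf: "Vector_Spaces.linear scale scale f" using lin_mul[of 1 e] by (simp add: f_def)
  interpret lf: Vector_Spaces.linear scale scale f by fact
  have sV: "subspace V" and sW: "subspace W" using fV fW fd_def by auto
  have sV': "subspace V'" unfolding V'_def subspace_def using sV sW
    by (auto simp: subspace_def distrib_right ml[symmetric])
  show fV': "fd V'" by (rule fd_sub[OF fV sV']) (auto simp: V'_def)
  obtain FV where FV: "finite FV" "FV \<subseteq> V" "span FV = V" using fV fd_def by blast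
  obtain FW where FW: "finite FW" "FW \<subseteq> W" "span FW = W" using fW fd_def by blast
  have Wsub: "W \<union> f ` V \<subseteq> span (FW \<union> f ` FV)"
  proof -
    have "W \<subseteq> span (FW \<union> f ` FV)" using FW(3) span_mono[of FW "FW \<union> f ` FV"] by auto
    moreover have "f ` V \<subseteq> span (FW \<union> f ` FV)"
      using FV(3) lf.span_image[of FV] span_mono[of "f ` FV" "FW \<union> f ` FV"] by auto
    ultimately show ?thesis by blast
  qed
  have W'sub: "W' \<subseteq> span (FW \<union> f ` FV)"
    using span_minimal[OF Wsub subspace_span] unfolding W'_def f_def by simp
  show fW': "fd W'" by (rule fd_sub[OF fd_span _ W'sub]) (use FV FW in \<open>auto simp: W'_def\<close>)
  obtain BW where BW: "finite BW" "BW \<subseteq> W" "independent BW" "span BW = W" "card BW = dim W"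
    using fd_basis[OF fW] by blast
  obtain B' where B': "BW \<subseteq> B'" "B' \<subseteq> W \<union> f ` V" "independent B'" "W \<union> f ` V \<subseteq> span B'"
    using maximal_independent_subset_extend[of BW "W \<union> f ` V"] BW by blast
  have B'W': "B' \<subseteq> W'" using B'(2) span_superset unfolding W'_def f_def by blast
  have spB': "span B' = W'"
    using B' B'W' unfolding W'_def f_def
    by (metis span_minimal subspace_span span_mono subset_antisym span_span)
  have fB': "finite B'" and cB': "card B' \<le> dim W'" using indep_le_dim[OF fW' B'W' B'(3)] by auto
  have nW: "b \<notin> W" if "b \<in> B' - BW" for b
  proof
    assume "b \<in> W"
    then have "b \<in> span (B' - {b})" using BW(4) span_mono[of BW "B' - {b}"] B'(1) that by auto
    then show False using B'(3) that dependent_def by blast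
  qed
  define E where "E = inv_into V f ` (B' - BW)"
  have inF: "b \<in> f ` V" if "b \<in> B' - BW" for b using nW[OF that] that B'(2) by blast
  have EV: "E \<subseteq> V" unfolding E_def using inF by (auto intro: inv_into_into)
  have fE: "f ` E = B' - BW" unfolding E_def using inF by (force simp: f_inv_into_f image_image)
  have cE: "card E \<le> card B' - card BW"
    using card_image_le[of "B' - BW" "inv_into V f"] fB' B'(1) BW(1)
    by (simp add: E_def card_Diff_subset)
  obtain BV where BV: "finite BV" "BV \<subseteq> V'" "independent BV" "span BV = V'" "card BV = dim V'"
    using fd_basis[OF fV'] by blast
  have Vsub: "V \<subseteq> span (BV \<union> E)"
  proof
    fix v assume v: "v \<in> V"
    have "f v \<in> span B'" using v B'(4) by blast
    moreover have "B' = BW \<union> f ` E" using fE B'(1) by blast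
    ultimately have "f v \<in> span (BW \<union> f ` E)" by simp
    then obtain w y where wy: "f v = w + y" "w \<in> span BW" "y \<in> span (f ` E)"
      using span_Un by blast
    then obtain x where x: "x \<in> span E" "y = f x" using lf.span_image by auto
    have xV: "x \<in> V" using x(1) EV sV span_minimal by blast
    have "f (v - x) = w" using wy x lf.diff by simp
    then have "v - x \<in> V'" using wy(2) BW(4) v xV sV subspace_diff unfolding V'_def f_def by blast
    then have "v - x \<in> span (BV \<union> E)" using BV(4) span_mono[of BV "BV \<union> E"] by auto
    moreover have "x \<in> span (BV \<union> E)" using x(1) span_mono[of E "BV \<union> E"] by auto
    ultimately have "(v - x) + x \<in> span (BV \<union> E)" by (rule span_add)
    then show "v \<in> span (BV \<union> E)" by simp
  qed
  have fE': "finite E" unfolding E_def using fB' by simp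
  have "dim V \<le> card (BV \<union> E)" using dim_le_card[OF Vsub] BV(1) fE' by simp
  also have "\<dots> \<le> card BV + card E" by (rule card_Un_le)
  finally show "dim V + dim W \<le> dim V' + dim W'"
    using cE cB' BV(5) BW(5) card_mono[OF fB' B'(1)] unfolding f_def by linarith
qed


lemma core:
  assumes "fd V" "fd W" "1 \<in> V" "1 \<in> W" "\<forall>x\<in>V. \<forall>y\<in>V. x*y = y*x"
  shows "\<exists>S H. subspace S \<and> S \<subseteq> span (set_prod V W) \<and> subspace H \<and> 1 \<in> H \<and>
     (\<forall>x\<in>H. \<forall>y\<in>H. x*y \<in> H) \<and> fd H \<and> 1 \<in> S \<and> range (\<lambda>c. c *k 1) \<subseteq> H \<and>
     dim V + dim W \<le> dim S + dim H \<and> set_prod H S = S"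
  using assms
proof (induction "dim V" arbitrary: V W rule: less_induct)
  case less
  note fV = less.prems(1) and fW = less.prems(2) and oV = less.prems(3) and oW = less.prems(4)
    and cV = less.prems(5)
  have sV: "subspace V" and sW: "subspace W" using fV fW fd_def by auto
  show ?case
  proof (cases "\<exists>e\<in>W. \<exists>v\<in>V. v * e \<notin> W")
    case True
    then obtain e v0 where e: "e \<in> W" "v0 \<in> V" "v0 * e \<notin> W" by blast
    define V' where "V' = {v\<in>V. v * e \<in> W}"
    define W' where "W' = span (W \<union> (\<lambda>v. v * e) ` V)"
    have st: "dim V + dim W \<le> dim V' + dim W'" "fd V'" "fd W'"
      using step_dim[OF fV fW, of e] unfolding V'_def W'_def by auto
    have sV': "subspace V'" using st(2) fd_def by auto
    have lt: "dim V' < dim V"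
      by (rule dim_psub[OF fV sV']) (use e in \<open>auto simp: V'_def\<close>)
    have oV': "1 \<in> V'" using oV e by (simp add: V'_def)
    have oW': "1 \<in> W'" using oW span_superset unfolding W'_def by blast
    have cV': "\<forall>x\<in>V'. \<forall>y\<in>V'. x*y = y*x" using cV by (auto simp: V'_def)
    obtain S H where SH: "subspace S" "S \<subseteq> span (set_prod V' W')" "subspace H" "1 \<in> H"
      "\<forall>x\<in>H. \<forall>y\<in>H. x*y \<in> H" "fd H" "1 \<in> S" "range (\<lambda>c. c *k 1) \<subseteq> H"
      "dim V' + dim W' \<le> dim S + dim H" "set_prod H S = S"
      using less.hyps[OF lt st(2) st(3) oV' oW' cV'] by blast
    have "set_prod V' W' \<subseteq> span (set_prod V W)"
    proof
      fix z assume "z \<in> set_prod V' W'"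
      then obtain a b where ab: "z = a * b" "a \<in> V'" "b \<in> W'" by (auto simp: set_prod_def)
      have "a * g \<in> span (set_prod V W)" if g: "g \<in> W \<union> (\<lambda>v. v * e) ` V" for g
      proof (cases "g \<in> W")
        case True
        then show ?thesis using ab(2) by (auto simp: V'_def set_prod_def intro!: span_base)
      next
        case False
        then obtain x where x: "x \<in> V" "g = x * e" using g by blast
        have "a * g = x * (a * e)" using x cV ab(2) by (simp add: V'_def mult.assoc[symmetric])
        then show ?thesis using x ab(2) by (auto simp: V'_def set_prod_def intro!: span_base)
      qed
      then show "z \<in> span (set_prod V W)"
        using LM[OF subspace_span _ ab(3)[unfolded W'_def]] ab(1) by blast
    qed
    then have "span (set_prod V' W') \<subseteq> span (set_prod V W)"
      using span_minimal subspace_span by blast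
    then show ?thesis using SH st(1) by (intro exI[of _ S] exI[of _ H]) auto
  next
    case False
    then have inv: "\<forall>v\<in>V. \<forall>w\<in>W. v * w \<in> W" by blast
    define H where "H = {h. \<forall>w\<in>W. h * w \<in> W}"
    have sH: "subspace H" unfolding H_def subspace_def using sW
      by (auto simp: subspace_def distrib_right ml[symmetric])
    have HW: "H \<subseteq> W" unfolding H_def using oW by force
    have fH: "fd H" by (rule fd_sub[OF fW sH HW])
    have VH: "V \<subseteq> H" using inv H_def by blast
    have "dim V \<le> dim H" by (rule dim_mono_fd[OF fH VH])
    moreover have "W \<subseteq> span (set_prod V W)"
      using oV by (force simp: set_prod_def intro: span_base)
    moreover have "set_prod H W = W"
    proof
      show "set_prod H W \<subseteq> W" by (auto simp: set_prod_def H_def)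
      show "W \<subseteq> set_prod H W" unfolding set_prod_def
      proof
        fix w assume "w \<in> W"
        moreover have "(1::'a) \<in> H" by (simp add: H_def)
        ultimately show "w \<in> {v * w |v w. v \<in> H \<and> w \<in> W}" by force
      qed
    qed
    moreover have "range (\<lambda>c. c *k 1) \<subseteq> H"
      unfolding H_def using sW by (auto simp: ml[symmetric] subspace_def)
    moreover have "\<forall>x\<in>H. \<forall>y\<in>H. x*y \<in> H" by (auto simp: H_def mult.assoc)
    moreover have "(1::'a) \<in> H" by (simp add: H_def)
    ultimately show ?thesis using sW sH fH oW
      by (intro exI[of _ W] exI[of _ H]) auto
  qed
qed


lemma fd_eq: "fin_dim_subspace scale S = fd S"
  by (simp add: fin_dim_subspace_def fd_def)

lemma fd_image:
  assumes lf: "Vector_Spaces.linear scale scale f" and "fd S"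
  shows "fd (f ` S)"
proof -
  interpret lf: Vector_Spaces.linear scale scale f by fact
  obtain F where F: "finite F" "F \<subseteq> S" "span F = S" and sS: "subspace S" using assms(2) fd_def by blast
  have "span (f ` F) = f ` S" using lf.span_image F(3) by simp
  then show ?thesis unfolding fd_def using lf.subspace_image[OF sS] F by blast
qed

lemma main:
  assumes fV: "fd V" and fW: "fd W" and cV: "\<forall>x\<in>V. \<forall>y\<in>V. x * y = y * x"
    and uV: "V \<inter> units_of_ring \<noteq> {}" and uW: "W \<inter> units_of_ring \<noteq> {}"
  shows "\<exists>S H. subspace S \<and> S \<subseteq> span (set_prod V W) \<and>
           is_subalgebra scale H \<and> fin_dim_subspace scale H \<and>
           S \<inter> units_of_ring \<noteq> {} \<and>
           range (\<lambda>c. c *k 1) \<subseteq> H \<and>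
           dim (span (set_prod V W)) \<ge> dim S \<and>
           int (dim S) \<ge> int (dim V) + int (dim W) - int (dim H) \<and>
           set_prod H S = S"
proof -
  obtain v0 a where va: "v0 \<in> V" "v0 * a = 1" "a * v0 = 1" using uV by (auto simp: units_of_ring_def)
  obtain w0 b where wb: "w0 \<in> W" "w0 * b = 1" "b * w0 = 1" using uW by (auto simp: units_of_ring_def)
  have va': "v0 * (a * z) = z" "a * (v0 * z) = z" for z
    using va by (simp_all add: mult.assoc[symmetric])
  have wb': "w0 * (b * z) = z" "b * (w0 * z) = z" for z
    using wb by (simp_all add: mult.assoc[symmetric])
  have lin1: "Vector_Spaces.linear scale scale (\<lambda>s. a * s)" using lin_mul[of a 1] by simp
  have lin2: "Vector_Spaces.linear scale scale (\<lambda>s. s * b)" using lin_mul[of 1 b] by simp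
  have ling: "Vector_Spaces.linear scale scale (\<lambda>s. v0 * s * w0)" by (rule lin_mul)
  have link: "Vector_Spaces.linear scale scale (\<lambda>s. v0 * s * a)" by (rule lin_mul)
  have inj1: "inj (\<lambda>s. a * s)" by (rule injI) (metis va'(1))
  have inj2: "inj (\<lambda>s. s * b)" by (rule injI) (metis mult.assoc mult_1_right wb(3))
  have injg: "inj (\<lambda>s. v0 * s * w0)" by (rule injI) (metis mult.assoc va'(2) wb'(1) mult_1_right wb(2))
  have injk: "inj (\<lambda>s. v0 * s * a)" by (rule injI) (metis mult.assoc va'(2) mult_1_right va(2))
  define V0 where "V0 = (\<lambda>s. a * s) ` V"
  define W0 where "W0 = (\<lambda>s. s * b) ` W"
  have fV0: "fd V0" unfolding V0_def by (rule fd_image[OF lin1 fV])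
  have fW0: "fd W0" unfolding W0_def by (rule fd_image[OF lin2 fW])
  have dV0: "dim V0 = dim V" unfolding V0_def by (rule dim_inj_image[OF lin1 inj1])
  have dW0: "dim W0 = dim W" unfolding W0_def by (rule dim_inj_image[OF lin2 inj2])
  have oV0: "1 \<in> V0" using va unfolding V0_def by force
  have oW0: "1 \<in> W0" using wb unfolding W0_def by force
  have ac: "a * x = x * a" if "x \<in> V" for x
  proof -
    have "a * x = a * x * (v0 * a)" using va by simp
    also have "\<dots> = a * (x * v0) * a" by (simp add: mult.assoc)
    also have "\<dots> = a * (v0 * x) * a" using cV that va by metis
    also have "\<dots> = x * a" using va' by (simp add: mult.assoc)
    finally show ?thesis .
  qed
  have cV0: "\<forall>x\<in>V0. \<forall>y\<in>V0. x * y = y * x"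
  proof (intro ballI)
    fix x y assume "x \<in> V0" "y \<in> V0"
    then obtain x' y' where xy: "x = a * x'" "y = a * y'" "x' \<in> V" "y' \<in> V" by (auto simp: V0_def)
    have "a * x' * (a * y') = a * (x' * a) * y'" by (simp add: mult.assoc)
    also have "\<dots> = a * (a * x') * y'" using ac[OF xy(3)] by simp
    also have "\<dots> = a * a * (x' * y')" by (simp add: mult.assoc)
    also have "\<dots> = a * a * (y' * x')" using cV xy by metis
    also have "\<dots> = a * (a * y') * x'" by (simp add: mult.assoc)
    also have "\<dots> = a * (y' * a) * x'" using ac[OF xy(4)] by simp
    also have "\<dots> = a * y' * (a * x')" by (simp add: mult.assoc)
    finally show "x * y = y * x" using xy by simp
  qed
  obtain S0 H0 where SH: "subspace S0" "S0 \<subseteq> span (set_prod V0 W0)" "subspace H0" "1 \<in> H0"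
      "\<forall>x\<in>H0. \<forall>y\<in>H0. x*y \<in> H0" "fd H0" "1 \<in> S0" "range (\<lambda>c. c *k 1) \<subseteq> H0"
      "dim V0 + dim W0 \<le> dim S0 + dim H0" "set_prod H0 S0 = S0"
    using core[OF fV0 fW0 oV0 oW0 cV0] by blast
  define g where "g = (\<lambda>s. v0 * s * w0)"
  define k where "k = (\<lambda>s. v0 * s * a)"
  interpret lg: Vector_Spaces.linear scale scale g using ling g_def by simp
  interpret lk: Vector_Spaces.linear scale scale k using link k_def by simp
  define S where "S = g ` S0"
  define H where "H = k ` H0"
  have sS: "subspace S" unfolding S_def by (rule lg.subspace_image[OF SH(1)])
  have sH: "subspace H" unfolding H_def by (rule lk.subspace_image[OF SH(3)])
  have gprod: "g ` set_prod V0 W0 \<subseteq> set_prod V W"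
  proof
    fix z assume "z \<in> g ` set_prod V0 W0"
    then obtain x y where xy: "x \<in> V" "y \<in> W" "z = g (a * x * (y * b))"
      by (auto simp: set_prod_def V0_def W0_def)
    have "z = x * y" using xy(3) va' wb by (simp add: g_def mult.assoc)
    then show "z \<in> set_prod V W" using xy by (auto simp: set_prod_def)
  qed
  have SV: "S \<subseteq> span (set_prod V W)"
  proof -
    have "S \<subseteq> g ` span (set_prod V0 W0)" using SH(2) S_def by auto
    also have "\<dots> = span (g ` set_prod V0 W0)" by (simp add: lg.span_image)
    also have "\<dots> \<subseteq> span (set_prod V W)" using gprod by (rule span_mono)
    finally show ?thesis .
  qed
  have subH: "is_subalgebra scale H"
    unfolding is_subalgebra_def
  proof (intro conjI ballI)
    show "subspace H" by (rule sH)
    show "1 \<in> H" using SH(4) va unfolding H_def k_def by force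
    fix x y assume "x \<in> H" "y \<in> H"
    then obtain x' y' where xy: "x = k x'" "y = k y'" "x' \<in> H0" "y' \<in> H0" by (auto simp: H_def)
    have "x * y = k (x' * y')" using xy va' by (simp add: k_def mult.assoc)
    then show "x * y \<in> H" using xy SH(5) H_def by auto
  qed
  have fH: "fin_dim_subspace scale H"
    unfolding fd_eq H_def by (rule fd_image[OF _ SH(6)]) (simp add: link k_def)
  have uS: "S \<inter> units_of_ring \<noteq> {}"
  proof -
    have "g 1 \<in> S" using SH(7) S_def by auto
    moreover have "g 1 \<in> units_of_ring" unfolding units_of_ring_def g_def
    proof (simp, intro exI[of _ "b * a"] conjI)
      show "v0 * w0 * (b * a) = 1" using va wb' by (simp add: mult.assoc)
      show "b * a * (v0 * w0) = 1" using va' wb by (simp add: mult.assoc)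
    qed
    ultimately show ?thesis by blast
  qed
  have rH: "range (\<lambda>c. c *k 1) \<subseteq> H"
  proof
    fix z assume "z \<in> range (\<lambda>c. c *k 1)"
    then obtain c where c: "z = c *k 1" by blast
    have "k (c *k 1) = (v0 * (c *k 1)) * a" by (simp add: k_def)
    also have "\<dots> = (c *k (v0 * 1)) * a" by (simp only: mr[symmetric])
    also have "\<dots> = c *k (v0 * 1 * a)" by (simp only: ml[symmetric])
    finally have "k (c *k 1) = c *k (v0 * 1 * a)" .
    then have "z = k (c *k 1)" using c va by simp
    then show "z \<in> H" using SH(8) H_def by auto
  qed
  obtain FV where FV: "finite FV" "FV \<subseteq> V" "span FV = V" using fV fd_def by blast
  obtain FW where FW: "finite FW" "FW \<subseteq> W" "span FW = W" using fW fd_def by blast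
  have "set_prod V W \<subseteq> span (set_prod FV FW)"
    using prod_span FV(3) FW(3) by (auto simp: set_prod_def)
  then have spsub: "span (set_prod V W) \<subseteq> span (set_prod FV FW)"
    using span_minimal subspace_span by blast
  have "set_prod FV FW = (\<lambda>(x,y). x * y) ` (FV \<times> FW)" by (auto simp: set_prod_def)
  then have "finite (set_prod FV FW)" using FV(1) FW(1) by simp
  then have fVW: "fd (span (set_prod V W))" using fd_sub[OF fd_span _ spsub] by simp
  have dS: "dim S \<le> dim (span (set_prod V W))" using dim_mono_fd[OF fVW SV] .
  have dSS: "dim S = dim S0" unfolding S_def by (rule dim_inj_image[OF ling[folded g_def] injg[folded g_def]])
  have dHH: "dim H = dim H0" unfolding H_def by (rule dim_inj_image[OF link[folded k_def] injk[folded k_def]])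
  have prodS: "set_prod H S = S"
  proof -
    have kg: "k h * g s = g (h * s)" for h s using va' by (simp add: k_def g_def mult.assoc)
    have "set_prod H S = g ` set_prod H0 S0"
      unfolding set_prod_def H_def S_def by (force simp: kg)
    then show ?thesis using SH(10) S_def by simp
  qed
  show ?thesis
    using sS SV subH fH uS rH dS SH(9) dSS dHH dV0 dW0 prodS
    by (intro exI[of _ S] exI[of _ H]) auto
qed

end

theorem corollary4p9:
  fixes smult_k :: "'k::field \<Rightarrow> 'a::ring_1 \<Rightarrow> 'a"
    and V W :: "'a set"
  assumes "infinite (UNIV :: 'k set)"
    and "is_k_algebra smult_k"
    and "hyp_Hs smult_k"
    and "fin_dim_subspace smult_k V"
    and "fin_dim_subspace smult_k W"
    and "\<forall>x\<in>V. \<forall>y\<in>V. x * y = y * x"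
    and "V \<inter> units_of_ring \<noteq> {}"
    and "W \<inter> units_of_ring \<noteq> {}"
  shows "\<exists>S H. module.subspace smult_k S \<and> S \<subseteq> module.span smult_k (set_prod V W) \<and>
           is_subalgebra smult_k H \<and> fin_dim_subspace smult_k H \<and>
           S \<inter> units_of_ring \<noteq> {} \<and>
           range (\<lambda>c. smult_k c 1) \<subseteq> H \<and>
           vector_space.dim smult_k (module.span smult_k (set_prod V W)) \<ge> vector_space.dim smult_k S \<and>
           int (vector_space.dim smult_k S) \<ge>
             int (vector_space.dim smult_k V) + int (vector_space.dim smult_k W)
             - int (vector_space.dim smult_k H) \<and>
           set_prod H S = S"
proof -
  interpret kalg smult_k
    using assms(2) unfolding is_k_algebra_def kalg_def kalg_axioms_def by blast
  show ?thesis
    using main[OF assms(4,5)[unfolded fd_eq] assms(6,7,8)] by blast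
qed

end
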